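(* Let $(\mathcal{P},+)$ be a reparametrization category. For all $\ell',\ell''\in\mathrm{Obj}(\mathcal{P})$ there is an isomorphism of $\mathcal{P}$-spaces, natural with respect to $\ell'$ and $\ell''$, \[\int^{\ell}\mathcal{P}(-,\ell'+\ell)\times\mathcal{P}(\ell,\ell'')\cong\mathcal{P}(-,\ell'+\ell''),\] which takes the equivalence class of $(\psi,\phi)\in\mathcal{P}(-,\ell'+\ell)\times\mathcal{P}(\ell,\ell'')$ to $(\mathrm{id}_{\ell'}\otimes\phi)\psi$.
   Context: All enriched categories are enriched over the cartesian closed category $\mathbf{Top}$ of ($\Delta$-generated) topological spaces. A reparametrization category is a small enriched semimonoidal category $(\mathcal{P},\otimes)$ (enriched meaning the hom-sets are spaces, composition is continuous and $\mathcal{P}(a,b)\times\mathcal{P}(c,d)\to\mathcal{P}(a\otimes c,b\otimes d)$ is continuous) such that: (1) the semimonoidal structure is strict; (2) all spaces $\mathcal{P}(\ell,\ell')$ are contractible; (3) for every map $\phi:\ell\to\ell'$ and all objects $\ell'_1,\ell'_2$ with $\ell'_1\otimes\ell'_2=\ell'$, there exist maps $\phi_1:\ell_1\to\ell'_1$, $\phi_2:\ell_2\to\ell'_2$ with $\phi=\phi_1\otimes\phi_2$. One writes $\ell+\ell':=\ell\otimes\ell'$ on objects. A $\mathcal{P}$-space is an enriched functor $\mathcal{P}^{op}\to\mathbf{Top}$; the coend is taken in the category of $\mathcal{P}$-spaces. *)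

theory Defs
  imports "HOL-Analysis.Analysis" "HOL-Homology.Simplices"
begin

definition simplex_top :: "nat \<Rightarrow> (nat \<Rightarrow> real) topology" where
  "simplex_top n = subtopology (powertop_real UNIV) (standard_simplex n)"

definition dgen :: "'a topology \<Rightarrow> 'a topology" where
  "dgen X = topology (\<lambda>U. U \<subseteq> topspace X \<and>
      (\<forall>n \<sigma>. continuous_map (simplex_top n) X \<sigma> \<longrightarrow>
          openin (simplex_top n) {x \<in> standard_simplex n. \<sigma> x \<in> U}))"

definition delta_generated :: "'a topology \<Rightarrow> bool" where
  "delta_generated X \<longleftrightarrow> dgen X = X"

definition dprod :: "'a topology \<Rightarrow> 'b topology \<Rightarrow> ('a \<times> 'b) topology" where
  "dprod X Y = dgen (prod_topology X Y)"

definition dcontractible :: "'a topology \<Rightarrow> bool" where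
  "dcontractible X \<longleftrightarrow> (\<exists>a h. a \<in> topspace X \<and>
      continuous_map (dprod (top_of_set {0..1::real}) X) X h \<and>
      (\<forall>x \<in> topspace X. h (0, x) = x \<and> h (1, x) = a))"

definition quot_top :: "'a topology \<Rightarrow> ('a \<times> 'a) set \<Rightarrow> 'a set topology" where
  "quot_top X R = topology (\<lambda>U. U \<subseteq> topspace X // R \<and>
      openin X {x \<in> topspace X. R `` {x} \<in> U})"

text \<open>Hom a b : the hom-space P(a,b) (its carrier is the hom-set).
  Cmp a b c g f : composite g \<circ> f of f : a \<rightarrow> b and g : b \<rightarrow> c.
  Tm a b c d f g : f \<otimes> g : a \<otimes> c \<rightarrow> b \<otimes> d for f : a \<rightarrow> b, g : c \<rightarrow> d.\<close>

record ('o, 'm) smcat =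
  Hom :: "'o \<Rightarrow> 'o \<Rightarrow> 'm topology"
  Cmp :: "'o \<Rightarrow> 'o \<Rightarrow> 'o \<Rightarrow> 'm \<Rightarrow> 'm \<Rightarrow> 'm"
  Idm :: "'o \<Rightarrow> 'm"
  Ot  :: "'o \<Rightarrow> 'o \<Rightarrow> 'o"
  Tm  :: "'o \<Rightarrow> 'o \<Rightarrow> 'o \<Rightarrow> 'o \<Rightarrow> 'm \<Rightarrow> 'm \<Rightarrow> 'm"

abbreviation hom :: "('o, 'm) smcat \<Rightarrow> 'o \<Rightarrow> 'o \<Rightarrow> 'm set" where
  "hom P a b \<equiv> topspace (Hom P a b)"

definition enriched_category :: "('o, 'm, 'z) smcat_scheme \<Rightarrow> bool" where
  "enriched_category P \<longleftrightarrow>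
     (\<forall>a b. delta_generated (Hom P a b)) \<and>
     (\<forall>a. Idm P a \<in> topspace (Hom P a a)) \<and>
     (\<forall>a b c f g. f \<in> topspace (Hom P a b) \<and> g \<in> topspace (Hom P b c) \<longrightarrow>
        Cmp P a b c g f \<in> topspace (Hom P a c)) \<and>
     (\<forall>a b f. f \<in> topspace (Hom P a b) \<longrightarrow>
        Cmp P a a b f (Idm P a) = f \<and> Cmp P a b b (Idm P b) f = f) \<and>
     (\<forall>a b c d f g h. f \<in> topspace (Hom P a b) \<and> g \<in> topspace (Hom P b c) \<and>
        h \<in> topspace (Hom P c d) \<longrightarrow>
        Cmp P a c d h (Cmp P a b c g f) = Cmp P a b d (Cmp P b c d h g) f) \<and>
     (\<forall>a b c. continuous_map (dprod (Hom P b c) (Hom P a b)) (Hom P a c)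
        (\<lambda>(g, f). Cmp P a b c g f))"

definition strict_semimonoidal :: "('o, 'm, 'z) smcat_scheme \<Rightarrow> bool" where
  "strict_semimonoidal P \<longleftrightarrow>
     enriched_category P \<and>
     \<comment> \<open>bifunctor: well-typed, preserves identities and composition, continuous\<close>
     (\<forall>a b c d f g. f \<in> topspace (Hom P a b) \<and> g \<in> topspace (Hom P c d) \<longrightarrow>
        Tm P a b c d f g \<in> topspace (Hom P (Ot P a c) (Ot P b d))) \<and>
     (\<forall>a c. Tm P a a c c (Idm P a) (Idm P c) = Idm P (Ot P a c)) \<and>
     (\<forall>a b b2 c d d2 f f' g g'.
        f \<in> topspace (Hom P a b) \<and> f' \<in> topspace (Hom P b b2) \<and>
        g \<in> topspace (Hom P c d) \<and> g' \<in> topspace (Hom P d d2) \<longrightarrow>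
        Cmp P (Ot P a c) (Ot P b d) (Ot P b2 d2) (Tm P b b2 d d2 f' g') (Tm P a b c d f g)
          = Tm P a b2 c d2 (Cmp P a b b2 f' f) (Cmp P c d d2 g' g)) \<and>
     (\<forall>a b c d. continuous_map (dprod (Hom P a b) (Hom P c d))
        (Hom P (Ot P a c) (Ot P b d)) (\<lambda>(f, g). Tm P a b c d f g)) \<and>
     \<comment> \<open>strictness: associator is the identity\<close>
     (\<forall>a b c. Ot P (Ot P a b) c = Ot P a (Ot P b c)) \<and>
     (\<forall>a b a' b' a'' b'' f f' f''.
        f \<in> topspace (Hom P a b) \<and> f' \<in> topspace (Hom P a' b') \<and>
        f'' \<in> topspace (Hom P a'' b'') \<longrightarrow>
        Tm P (Ot P a a') (Ot P b b') a'' b'' (Tm P a b a' b' f f') f''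
          = Tm P a b (Ot P a' a'') (Ot P b' b'') f (Tm P a' b' a'' b'' f' f''))"

definition reparam_cat :: "('o, 'm, 'z) smcat_scheme \<Rightarrow> bool" where
  "reparam_cat P \<longleftrightarrow>
     strict_semimonoidal P \<and>
     (\<forall>a b. dcontractible (Hom P a b)) \<and>
     (\<forall>l l' \<phi> l1' l2'. \<phi> \<in> topspace (Hom P l l') \<and> Ot P l1' l2' = l' \<longrightarrow>
        (\<exists>l1 l2 \<phi>1 \<phi>2. Ot P l1 l2 = l \<and> \<phi>1 \<in> topspace (Hom P l1 l1') \<and>
           \<phi>2 \<in> topspace (Hom P l2 l2') \<and> \<phi> = Tm P l1 l1' l2 l2' \<phi>1 \<phi>2))"

definition coend_sum :: "('o, 'm, 'z) smcat_scheme \<Rightarrow> 'o \<Rightarrow> 'o \<Rightarrow> 'o \<Rightarrow> ('o \<times> 'm \<times> 'm) topology" where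
  "coend_sum P m l' l'' = sum_topology (\<lambda>l. dprod (Hom P m (Ot P l' l)) (Hom P l l'')) UNIV"

text \<open>Generating relation: for \<theta> : l0 \<rightarrow> l, \<psi> \<in> P(m, l'+l0), \<phi> \<in> P(l, l''),
  (\<psi>, \<phi>\<theta>) in the l0-summand is identified with ((id \<otimes> \<theta>)\<psi>, \<phi>) in the l-summand.\<close>
definition coend_step :: "('o, 'm, 'z) smcat_scheme \<Rightarrow> 'o \<Rightarrow> 'o \<Rightarrow> 'o \<Rightarrow> (('o \<times> 'm \<times> 'm) \<times> ('o \<times> 'm \<times> 'm)) set" where
  "coend_step P m l' l'' =
     {((l0, (\<psi>, Cmp P l0 l l'' \<phi> \<theta>)),
       (l, (Cmp P m (Ot P l' l0) (Ot P l' l) (Tm P l' l' l0 l (Idm P l') \<theta>) \<psi>, \<phi>))) |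
      l0 l \<theta> \<psi> \<phi>. \<theta> \<in> topspace (Hom P l0 l) \<and> \<psi> \<in> topspace (Hom P m (Ot P l' l0)) \<and>
         \<phi> \<in> topspace (Hom P l l'')}"

definition coend_rel :: "('o, 'm, 'z) smcat_scheme \<Rightarrow> 'o \<Rightarrow> 'o \<Rightarrow> 'o \<Rightarrow> (('o \<times> 'm \<times> 'm) \<times> ('o \<times> 'm \<times> 'm)) set" where
  "coend_rel P m l' l'' =
     {(x, y). x \<in> topspace (coend_sum P m l' l'') \<and> y \<in> topspace (coend_sum P m l' l'') \<and>
        (x, y) \<in> (coend_step P m l' l'' \<union> (coend_step P m l' l'')\<inverse>)\<^sup>*}"

definition coend_top :: "('o, 'm, 'z) smcat_scheme \<Rightarrow> 'o \<Rightarrow> 'o \<Rightarrow> 'o \<Rightarrow> ('o \<times> 'm \<times> 'm) set topology" where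
  "coend_top P m l' l'' = quot_top (coend_sum P m l' l'') (coend_rel P m l' l'')"

definition coend_class :: "('o, 'm, 'z) smcat_scheme \<Rightarrow> 'o \<Rightarrow> 'o \<Rightarrow> 'o \<Rightarrow> 'o \<times> 'm \<times> 'm \<Rightarrow> ('o \<times> 'm \<times> 'm) set" where
  "coend_class P m l' l'' x = coend_rel P m l' l'' `` {x}"

text \<open>P-space structure of the coend: \<theta> : m0 \<rightarrow> m acts by [\<psi>, \<phi>] \<mapsto> [\<psi>\<theta>, \<phi>].\<close>
definition coend_act :: "('o, 'm, 'z) smcat_scheme \<Rightarrow> 'o \<Rightarrow> 'o \<Rightarrow> 'o \<Rightarrow> 'o \<Rightarrow> 'm \<Rightarrow> ('o \<times> 'm \<times> 'm) set \<Rightarrow> ('o \<times> 'm \<times> 'm) set" where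
  "coend_act P l' l'' m0 m \<theta> C =
     coend_rel P m0 l' l'' `` ((\<lambda>(l, \<psi>, \<phi>). (l, Cmp P m0 m (Ot P l' l) \<psi> \<theta>, \<phi>)) ` C)"

text \<open>Functoriality in l': \<alpha> : l' \<rightarrow> k' acts by [\<psi>, \<phi>] \<mapsto> [(\<alpha> \<otimes> id) \<psi>, \<phi>].\<close>
definition coend_mapL :: "('o, 'm, 'z) smcat_scheme \<Rightarrow> 'o \<Rightarrow> 'o \<Rightarrow> 'o \<Rightarrow> 'o \<Rightarrow> 'm \<Rightarrow> ('o \<times> 'm \<times> 'm) set \<Rightarrow> ('o \<times> 'm \<times> 'm) set" where
  "coend_mapL P m l'' l' k' \<alpha> C =
     coend_rel P m k' l'' `` ((\<lambda>(l, \<psi>, \<phi>).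
        (l, Cmp P m (Ot P l' l) (Ot P k' l) (Tm P l' k' l l \<alpha> (Idm P l)) \<psi>, \<phi>)) ` C)"

text \<open>Functoriality in l'': \<beta> : l'' \<rightarrow> k'' acts by [\<psi>, \<phi>] \<mapsto> [\<psi>, \<beta>\<phi>].\<close>
definition coend_mapR :: "('o, 'm, 'z) smcat_scheme \<Rightarrow> 'o \<Rightarrow> 'o \<Rightarrow> 'o \<Rightarrow> 'o \<Rightarrow> 'm \<Rightarrow> ('o \<times> 'm \<times> 'm) set \<Rightarrow> ('o \<times> 'm \<times> 'm) set" where
  "coend_mapR P m l' l'' k'' \<beta> C =
     coend_rel P m l' k'' `` ((\<lambda>(l, \<psi>, \<phi>). (l, \<psi>, Cmp P l l'' k'' \<beta> \<phi>)) ` C)"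

definition coend_map :: "('o, 'm, 'z) smcat_scheme \<Rightarrow> 'o \<Rightarrow> 'o \<Rightarrow> 'o \<Rightarrow> ('o \<times> 'm \<times> 'm) set \<Rightarrow> 'm" where
  "coend_map P m l' l'' C =
     the_elem ((\<lambda>(l, \<psi>, \<phi>). Cmp P m (Ot P l' l) (Ot P l' l'')
                   (Tm P l' l' l l'' (Idm P l') \<phi>) \<psi>) ` C)"

end

theory Submission
  imports Defs
begin

lemma topspace_simplex_top [simp]: "topspace (simplex_top n) = standard_simplex n"
  by (simp add: simplex_top_def)

lemma istop_dgen: "istopology (\<lambda>U. U \<subseteq> topspace X \<and>
      (\<forall>n \<sigma>. continuous_map (simplex_top n) X \<sigma> \<longrightarrow>
          openin (simplex_top n) {x \<in> standard_simplex n. \<sigma> x \<in> U}))"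
proof -
  have 1: "{x \<in> standard_simplex n. \<sigma> x \<in> S \<inter> T} = {x \<in> standard_simplex n. \<sigma> x \<in> S} \<inter> {x \<in> standard_simplex n. \<sigma> x \<in> T}" for n \<sigma> S T
    by auto
  have 2: "{x \<in> standard_simplex n. \<sigma> x \<in> \<Union>K} = (\<Union>S\<in>K. {x \<in> standard_simplex n. \<sigma> x \<in> S})" for n \<sigma> K
    by auto
  show ?thesis unfolding istopology_def 1 2
    by (auto intro!: openin_Int openin_Union)
qed

lemma openin_dgen: "openin (dgen X) U \<longleftrightarrow> U \<subseteq> topspace X \<and>
      (\<forall>n \<sigma>. continuous_map (simplex_top n) X \<sigma> \<longrightarrow>
          openin (simplex_top n) {x \<in> standard_simplex n. \<sigma> x \<in> U})"
  unfolding dgen_def topology_inverse'[OF istop_dgen] by simp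

lemma topspace_dgen [simp]: "topspace (dgen X) = topspace X"
proof -
  have "openin (dgen X) (topspace X)"
  proof (subst openin_dgen, intro conjI allI impI)
    fix n \<sigma> assume c: "continuous_map (simplex_top n) X \<sigma>"
    have "{x \<in> standard_simplex n. \<sigma> x \<in> topspace X} = topspace (simplex_top n)"
      using continuous_map_image_subset_topspace[OF c] by auto
    then show "openin (simplex_top n) {x \<in> standard_simplex n. \<sigma> x \<in> topspace X}"
      by (metis openin_topspace)
  qed simp
  then have "topspace X \<subseteq> topspace (dgen X)" by (simp add: openin_subset)
  moreover have "topspace (dgen X) \<subseteq> topspace X"
    using openin_dgen[of X "topspace (dgen X)"] by simp
  ultimately show ?thesis by blast
qed

lemma cont_dgen_id: "continuous_map (dgen X) X (\<lambda>x. x)"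
  unfolding continuous_map_def
proof (intro conjI allI impI)
  fix U assume U: "openin X U"
  have "openin (dgen X) U"
  proof (subst openin_dgen, intro conjI allI impI)
    show "U \<subseteq> topspace X" using U openin_subset by blast
    fix n \<sigma> assume c: "continuous_map (simplex_top n) X \<sigma>"
    then show "openin (simplex_top n) {x \<in> standard_simplex n. \<sigma> x \<in> U}"
      using U unfolding continuous_map_def by (metis topspace_simplex_top)
  qed
  moreover have "{x \<in> topspace (dgen X). x \<in> U} = U"
    using U openin_subset by fastforce
  ultimately show "openin (dgen X) {x \<in> topspace (dgen X). x \<in> U}" by simp
qed auto

lemma cont_dgen_mono:
  assumes f: "continuous_map X Y f"
  shows "continuous_map (dgen X) (dgen Y) f"
  unfolding continuous_map_def
proof (intro conjI allI impI)
  show "f \<in> topspace (dgen X) \<rightarrow> topspace (dgen Y)"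
    using f by (simp add: continuous_map_def)
  fix U assume U: "openin (dgen Y) U"
  show "openin (dgen X) {x \<in> topspace (dgen X). f x \<in> U}"
  proof (subst openin_dgen, intro conjI allI impI)
    show "{x \<in> topspace (dgen X). f x \<in> U} \<subseteq> topspace X" by auto
    fix n \<sigma> assume c: "continuous_map (simplex_top n) X \<sigma>"
    then have fs: "continuous_map (simplex_top n) Y (f \<circ> \<sigma>)"
      using f continuous_map_compose by blast
    from U[unfolded openin_dgen] have U': "\<forall>n \<sigma>. continuous_map (simplex_top n) Y \<sigma> \<longrightarrow>
          openin (simplex_top n) {x \<in> standard_simplex n. \<sigma> x \<in> U}" by (rule conjunct2)
    have "openin (simplex_top n) {x \<in> standard_simplex n. (f \<circ> \<sigma>) x \<in> U}"
      using U'[rule_format, OF fs] .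
    moreover have "{x \<in> standard_simplex n. \<sigma> x \<in> {x \<in> topspace (dgen X). f x \<in> U}}
       = {x \<in> standard_simplex n. (f \<circ> \<sigma>) x \<in> U}"
      using continuous_map_image_subset_topspace[OF c] by auto
    ultimately show "openin (simplex_top n) {x \<in> standard_simplex n. \<sigma> x \<in> {x \<in> topspace (dgen X). f x \<in> U}}"
      by simp
  qed
qed

lemma istop_quot: "istopology (\<lambda>U. U \<subseteq> topspace X // R \<and>
      openin X {x \<in> topspace X. R `` {x} \<in> U})"
proof -
  have 1: "{x \<in> topspace X. R `` {x} \<in> S \<inter> T} = {x \<in> topspace X. R `` {x} \<in> S} \<inter> {x \<in> topspace X. R `` {x} \<in> T}" for S T
    by auto
  have 2: "{x \<in> topspace X. R `` {x} \<in> \<Union>K} = (\<Union>S\<in>K. {x \<in> topspace X. R `` {x} \<in> S})" for K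
    by auto
  show ?thesis unfolding istopology_def 1 2
    by (auto intro!: openin_Int openin_Union)
qed

lemma openin_quot: "openin (quot_top X R) U \<longleftrightarrow> U \<subseteq> topspace X // R \<and>
      openin X {x \<in> topspace X. R `` {x} \<in> U}"
  unfolding quot_top_def topology_inverse'[OF istop_quot] by simp

lemma topspace_quot [simp]: "topspace (quot_top X R) = topspace X // R"
proof -
  have "openin (quot_top X R) (topspace X // R)"
  proof -
    have "{x \<in> topspace X. R `` {x} \<in> topspace X // R} = topspace X"
      by (auto simp: quotient_def)
    then show ?thesis by (subst openin_quot) simp
  qed
  then have "topspace X // R \<subseteq> topspace (quot_top X R)" by (simp add: openin_subset)
  moreover have "topspace (quot_top X R) \<subseteq> topspace X // R"
    using openin_quot[of X R "topspace (quot_top X R)"] by simp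
  ultimately show ?thesis by blast
qed


lemma cont_sum:
  assumes "\<And>i. i \<in> I \<Longrightarrow> continuous_map (X i) Y (\<lambda>x. f (i, x))"
  shows "continuous_map (sum_topology X I) Y f"
  unfolding continuous_map_def
proof (intro conjI allI impI)
  show "f \<in> topspace (sum_topology X I) \<rightarrow> topspace Y"
    using assms by (auto simp: continuous_map_def Pi_iff)
  fix U assume U: "openin Y U"
  show "openin (sum_topology X I) {x \<in> topspace (sum_topology X I). f x \<in> U}"
    unfolding openin_sum_topology
  proof (intro conjI ballI)
    fix i assume i: "i \<in> I"
    have "{x. (i, x) \<in> {x \<in> topspace (sum_topology X I). f x \<in> U}} = {x \<in> topspace (X i). f (i, x) \<in> U}"
      using i by auto
    then show "openin (X i) {x. (i, x) \<in> {x \<in> topspace (sum_topology X I). f x \<in> U}}"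
      using assms[OF i] U by (simp add: continuous_map_def)
  qed auto
qed

lemma cont_into_dprod:
  assumes "delta_generated A" "continuous_map A (prod_topology C D) f"
  shows "continuous_map A (dprod C D) f"
  using cont_dgen_mono[OF assms(2)] assms(1) unfolding dprod_def delta_generated_def by simp

lemma cont_dprod_dprod:
  assumes "continuous_map (prod_topology A B) (prod_topology C D) f"
  shows "continuous_map (dprod A B) (dprod C D) f"
  using cont_dgen_mono[OF assms] unfolding dprod_def by simp

lemma topspace_dprod [simp]: "topspace (dprod A B) = topspace A \<times> topspace B"
  by (simp add: dprod_def)

locale rc =
  fixes P :: "('o, 'm) smcat"
  assumes ssm: "strict_semimonoidal P"
begin

lemma ec: "enriched_category P" using ssm unfolding strict_semimonoidal_def by (rule conjunct1)
lemmas E = ec[unfolded enriched_category_def]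
lemmas S = ssm[unfolded strict_semimonoidal_def, THEN conjunct2]

lemma dg: "delta_generated (Hom P a b)"
  using E by (elim conjE) blast
lemma idm_in [simp]: "Idm P a \<in> topspace (Hom P a a)"
  using E by (elim conjE) (erule spec)
lemma cmp_in [simp]: "f \<in> topspace (Hom P a b) \<Longrightarrow> g \<in> topspace (Hom P b c) \<Longrightarrow>
        Cmp P a b c g f \<in> topspace (Hom P a c)"
  using E by (elim conjE) meson
lemma cmp_idr [simp]: "f \<in> topspace (Hom P a b) \<Longrightarrow> Cmp P a a b f (Idm P a) = f"
  using E by (elim conjE) meson
lemma cmp_idl [simp]: "f \<in> topspace (Hom P a b) \<Longrightarrow> Cmp P a b b (Idm P b) f = f"
  using E by (elim conjE) meson
lemma cmp_assoc: "f \<in> topspace (Hom P a b) \<Longrightarrow> g \<in> topspace (Hom P b c) \<Longrightarrow>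
        h \<in> topspace (Hom P c d) \<Longrightarrow>
        Cmp P a c d h (Cmp P a b c g f) = Cmp P a b d (Cmp P b c d h g) f"
  using E by (elim conjE) meson
lemma cmp_cont: "continuous_map (dprod (Hom P b c) (Hom P a b)) (Hom P a c)
        (\<lambda>(g, f). Cmp P a b c g f)"
  using E by (elim conjE) meson
lemma tm_in [simp]: "f \<in> topspace (Hom P a b) \<Longrightarrow> g \<in> topspace (Hom P c d) \<Longrightarrow>
        Tm P a b c d f g \<in> topspace (Hom P (Ot P a c) (Ot P b d))"
  using S by (elim conjE) meson
lemma tm_id [simp]: "Tm P a a c c (Idm P a) (Idm P c) = Idm P (Ot P a c)"
  using S by (elim conjE) meson
lemma tm_cmp: "f \<in> topspace (Hom P a b) \<Longrightarrow> f' \<in> topspace (Hom P b b2) \<Longrightarrow>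
        g \<in> topspace (Hom P c d) \<Longrightarrow> g' \<in> topspace (Hom P d d2) \<Longrightarrow>
        Cmp P (Ot P a c) (Ot P b d) (Ot P b2 d2) (Tm P b b2 d d2 f' g') (Tm P a b c d f g)
          = Tm P a b2 c d2 (Cmp P a b b2 f' f) (Cmp P c d d2 g' g)"
  using S by (elim conjE) meson
lemma tm_cont: "continuous_map (dprod (Hom P a b) (Hom P c d))
        (Hom P (Ot P a c) (Ot P b d)) (\<lambda>(f, g). Tm P a b c d f g)"
  using S by (elim conjE) meson

definition F :: "'o \<Rightarrow> 'o \<Rightarrow> 'o \<Rightarrow> 'o \<times> 'm \<times> 'm \<Rightarrow> 'm" where
  "F m l' l'' = (\<lambda>(l, \<psi>, \<phi>). Cmp P m (Ot P l' l) (Ot P l' l'')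
                   (Tm P l' l' l l'' (Idm P l') \<phi>) \<psi>)"

lemma F_simp [simp]: "F m l' l'' (l, \<psi>, \<phi>) = Cmp P m (Ot P l' l) (Ot P l' l'')
                   (Tm P l' l' l l'' (Idm P l') \<phi>) \<psi>"
  by (simp add: F_def)

lemma coend_map_F: "coend_map P m l' l'' C = the_elem (F m l' l'' ` C)"
  unfolding coend_map_def F_def ..

lemma mem_X [simp]: "(l, \<psi>, \<phi>) \<in> topspace (coend_sum P m l' l'') \<longleftrightarrow>
   \<psi> \<in> topspace (Hom P m (Ot P l' l)) \<and> \<phi> \<in> topspace (Hom P l l'')"
  by (simp add: coend_sum_def)

lemma step_F:
  assumes "(a, b) \<in> coend_step P m l' l''"
  shows "a \<in> topspace (coend_sum P m l' l'') \<and> b \<in> topspace (coend_sum P m l' l'') \<and>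
         F m l' l'' a = F m l' l'' b"
proof -
  obtain l0 l \<theta> \<psi> \<phi> where a: "a = (l0, (\<psi>, Cmp P l0 l l'' \<phi> \<theta>))"
    and b: "b = (l, (Cmp P m (Ot P l' l0) (Ot P l' l) (Tm P l' l' l0 l (Idm P l') \<theta>) \<psi>, \<phi>))"
    and h: "\<theta> \<in> topspace (Hom P l0 l)" "\<psi> \<in> topspace (Hom P m (Ot P l' l0))"
         "\<phi> \<in> topspace (Hom P l l'')"
    using assms unfolding coend_step_def by blast
  have "F m l' l'' b = Cmp P m (Ot P l' l0) (Ot P l' l'')
     (Cmp P (Ot P l' l0) (Ot P l' l) (Ot P l' l'') (Tm P l' l' l l'' (Idm P l') \<phi>) (Tm P l' l' l0 l (Idm P l') \<theta>)) \<psi>"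
    using h by (simp add: b cmp_assoc)
  also have "\<dots> = F m l' l'' a"
    using h by (simp add: a tm_cmp)
  finally show ?thesis using h by (simp add: a b)
qed

lemma rtr_F: "(x, y) \<in> (coend_step P m l' l'' \<union> (coend_step P m l' l'')\<inverse>)\<^sup>* \<Longrightarrow> F m l' l'' x = F m l' l'' y"
proof (induction rule: rtrancl_induct)
  case (step y z)
  then show ?case using step_F by (metis Un_iff converse_iff)
qed simp

lemma rel_F: "(x, y) \<in> coend_rel P m l' l'' \<Longrightarrow> F m l' l'' x = F m l' l'' y"
  unfolding coend_rel_def using rtr_F by blast

lemma R_sub: "(x, y) \<in> coend_rel P m l' l'' \<Longrightarrow> x \<in> topspace (coend_sum P m l' l'') \<and> y \<in> topspace (coend_sum P m l' l'')"
  unfolding coend_rel_def by blast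

lemma equiv_R: "equiv (topspace (coend_sum P m l' l'')) (coend_rel P m l' l'')"
proof (rule equivI)
  show "coend_rel P m l' l'' \<subseteq> topspace (coend_sum P m l' l'') \<times> topspace (coend_sum P m l' l'')"
    using R_sub by auto
  show "refl_on (topspace (coend_sum P m l' l'')) (coend_rel P m l' l'')"
    by (rule refl_onI) (simp add: coend_rel_def)
  show "sym (coend_rel P m l' l'')"
  proof (rule symI)
    fix x y assume "(x, y) \<in> coend_rel P m l' l''"
    moreover have "(S\<^sup>*)\<inverse> = S\<^sup>*" if "S\<inverse> = S" for S :: "(('o \<times> 'm \<times> 'm) \<times> ('o \<times> 'm \<times> 'm)) set"
      by (metis rtrancl_converse that)
    moreover have "(coend_step P m l' l'' \<union> (coend_step P m l' l'')\<inverse>)\<inverse> = coend_step P m l' l'' \<union> (coend_step P m l' l'')\<inverse>"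
      by auto
    ultimately show "(y, x) \<in> coend_rel P m l' l''"
      unfolding coend_rel_def by (metis (no_types, lifting) case_prodD case_prodI converse_iff mem_Collect_eq)
  qed
  show "trans (coend_rel P m l' l'')"
    by (rule transI) (auto simp: coend_rel_def)
qed


lemma key:
  assumes "A \<noteq> {}" "A \<subseteq> topspace (coend_sum P m l' l'')" "\<And>a. a \<in> A \<Longrightarrow> F m l' l'' a = c"
  shows "coend_map P m l' l'' (coend_rel P m l' l'' `` A) = c"
proof -
  have "F m l' l'' ` (coend_rel P m l' l'' `` A) = {c}"
  proof
    show "F m l' l'' ` (coend_rel P m l' l'' `` A) \<subseteq> {c}"
      using assms(3) rel_F by fastforce
    obtain a where "a \<in> A" using assms(1) by blast
    moreover have "(a, a) \<in> coend_rel P m l' l''"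
      using equiv_R[of m l' l''] assms(2) \<open>a \<in> A\<close> unfolding equiv_def by (meson refl_onD subsetD)
    ultimately show "{c} \<subseteq> F m l' l'' ` (coend_rel P m l' l'' `` A)"
      using assms(3) by blast
  qed
  then show ?thesis by (simp add: coend_map_F)
qed

lemma map_class: "x \<in> topspace (coend_sum P m l' l'') \<Longrightarrow>
  coend_map P m l' l'' (coend_rel P m l' l'' `` {x}) = F m l' l'' x"
  by (rule key) auto

lemma transport:
  assumes C: "C \<in> topspace (coend_sum P m l' l'') // coend_rel P m l' l''"
    and T: "\<And>y. y \<in> topspace (coend_sum P m l' l'') \<Longrightarrow>
        T y \<in> topspace (coend_sum P m2 k' k'') \<and> F m2 k' k'' (T y) = G (F m l' l'' y)"
  shows "coend_map P m2 k' k'' (coend_rel P m2 k' k'' `` (T ` C)) = G (coend_map P m l' l'' C)"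
proof -
  obtain x where x: "x \<in> topspace (coend_sum P m l' l'')" and Cx: "C = coend_rel P m l' l'' `` {x}"
    using C by (auto elim: quotientE)
  have xC: "x \<in> C" using Cx x equiv_R by (metis equiv_class_self)
  have Csub: "C \<subseteq> topspace (coend_sum P m l' l'')" using Cx R_sub by blast
  show ?thesis
    unfolding Cx map_class[OF x]
  proof (rule key)
    show "T ` (coend_rel P m l' l'' `` {x}) \<noteq> {}" using xC Cx by blast
    show "T ` (coend_rel P m l' l'' `` {x}) \<subseteq> topspace (coend_sum P m2 k' k'')"
      using T Csub Cx by blast
    fix a assume "a \<in> T ` (coend_rel P m l' l'' `` {x})"
    then obtain y where y: "(x, y) \<in> coend_rel P m l' l''" "a = T y" by blast
    then show "F m2 k' k'' a = G (F m l' l'' x)"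
      using T[of y] R_sub[OF y(1)] rel_F[OF y(1)] by simp
  qed
qed

end


context rc
begin

lemma F_in: "x \<in> topspace (coend_sum P m l' l'') \<Longrightarrow> F m l' l'' x \<in> topspace (Hom P m (Ot P l' l''))"
  by (cases x) auto

lemma cont_summand:
  "continuous_map (dprod (Hom P m (Ot P l' l)) (Hom P l l'')) (Hom P m (Ot P l' l''))
     (\<lambda>x. F m l' l'' (l, x))"
proof -
  have c1: "continuous_map (Hom P l l'') (Hom P (Ot P l' l) (Ot P l' l'')) (\<lambda>\<phi>. Tm P l' l' l l'' (Idm P l') \<phi>)"
  proof -
    have "continuous_map (Hom P l l'') (prod_topology (Hom P l' l') (Hom P l l'')) (\<lambda>\<phi>. (Idm P l', \<phi>))"
      by (intro continuous_map_pairedI) auto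
    then have "continuous_map (Hom P l l'') (dprod (Hom P l' l') (Hom P l l'')) (\<lambda>\<phi>. (Idm P l', \<phi>))"
      using cont_into_dprod dg by blast
    from continuous_map_compose[OF this tm_cont] show ?thesis by (simp add: o_def)
  qed
  have "continuous_map (prod_topology (Hom P m (Ot P l' l)) (Hom P l l'')) (Hom P (Ot P l' l) (Ot P l' l''))
      (\<lambda>x. Tm P l' l' l l'' (Idm P l') (snd x))"
    using continuous_map_compose[OF continuous_map_snd c1] by (simp add: o_def)
  then have c2: "continuous_map (prod_topology (Hom P m (Ot P l' l)) (Hom P l l''))
     (prod_topology (Hom P (Ot P l' l) (Ot P l' l'')) (Hom P m (Ot P l' l)))
     (\<lambda>x. (Tm P l' l' l l'' (Idm P l') (snd x), fst x))"
    by (intro continuous_map_pairedI continuous_map_fst)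
  from continuous_map_compose[OF cont_dprod_dprod[OF c2] cmp_cont] show ?thesis
    by (simp add: o_def F_def case_prod_beta)
qed

lemma cont_F: "continuous_map (coend_sum P m l' l'') (Hom P m (Ot P l' l'')) (F m l' l'')"
  unfolding coend_sum_def by (rule cont_sum) (rule cont_summand)

lemma cont_inj: "continuous_map (Hom P m (Ot P l' l'')) (coend_sum P m l' l'') (\<lambda>\<psi>. (l'', \<psi>, Idm P l''))"
proof -
  have "continuous_map (Hom P m (Ot P l' l'')) (prod_topology (Hom P m (Ot P l' l'')) (Hom P l'' l'')) (\<lambda>\<psi>. (\<psi>, Idm P l''))"
    by (intro continuous_map_pairedI) auto
  then have "continuous_map (Hom P m (Ot P l' l'')) (dprod (Hom P m (Ot P l' l'')) (Hom P l'' l'')) (\<lambda>\<psi>. (\<psi>, Idm P l''))"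
    using cont_into_dprod dg by blast
  from continuous_map_compose[OF this continuous_map_component_injection[of l'' UNIV "\<lambda>l. dprod (Hom P m (Ot P l' l)) (Hom P l l'')"]]
  show ?thesis by (simp add: coend_sum_def o_def)
qed

lemma rel_back:
  assumes x: "x \<in> topspace (coend_sum P m l' l'')"
  shows "(x, (l'', F m l' l'' x, Idm P l'')) \<in> coend_rel P m l' l''"
proof -
  obtain l \<psi> \<phi> where xe: "x = (l, \<psi>, \<phi>)" by (cases x)
  with x have h: "\<psi> \<in> topspace (Hom P m (Ot P l' l))" "\<phi> \<in> topspace (Hom P l l'')" by auto
  have "((l, \<psi>, Cmp P l l'' l'' (Idm P l'') \<phi>),
         (l'', Cmp P m (Ot P l' l) (Ot P l' l'') (Tm P l' l' l l'' (Idm P l') \<phi>) \<psi>, Idm P l''))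
        \<in> coend_step P m l' l''"
    unfolding coend_step_def using h idm_in by blast
  then have "(x, (l'', F m l' l'' x, Idm P l'')) \<in> coend_step P m l' l''"
    using h by (simp add: xe)
  then show ?thesis
    unfolding coend_rel_def using step_F by blast
qed

lemma homeo: "homeomorphic_map (coend_top P m l' l'') (Hom P m (Ot P l' l'')) (coend_map P m l' l'')"
  unfolding homeomorphic_map_maps homeomorphic_maps_def
proof (intro exI[of _ "\<lambda>\<psi>. coend_rel P m l' l'' `` {(l'', \<psi>, Idm P l'')}"] conjI ballI)
  have cls: "\<exists>x\<in>topspace (coend_sum P m l' l''). C = coend_rel P m l' l'' `` {x} \<and> coend_map P m l' l'' C = F m l' l'' x"
    if "C \<in> topspace (coend_sum P m l' l'') // coend_rel P m l' l''" for C
    using that map_class by (auto elim!: quotientE)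
  show "continuous_map (coend_top P m l' l'') (Hom P m (Ot P l' l'')) (coend_map P m l' l'')"
    unfolding continuous_map_def coend_top_def topspace_quot
  proof (intro conjI allI impI)
    show "coend_map P m l' l'' \<in> topspace (coend_sum P m l' l'') // coend_rel P m l' l'' \<rightarrow> topspace (Hom P m (Ot P l' l''))"
      using cls F_in by fastforce
    fix U assume U: "openin (Hom P m (Ot P l' l'')) U"
    have eq: "{x \<in> topspace (coend_sum P m l' l''). coend_rel P m l' l'' `` {x} \<in>
        {C \<in> topspace (coend_sum P m l' l'') // coend_rel P m l' l''. coend_map P m l' l'' C \<in> U}}
       = {x \<in> topspace (coend_sum P m l' l''). F m l' l'' x \<in> U}"
      using map_class by (auto intro: quotientI)
    have "openin (coend_sum P m l' l'') {x \<in> topspace (coend_sum P m l' l''). F m l' l'' x \<in> U}"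
      using cont_F U by (simp add: continuous_map_def)
    then show "openin (quot_top (coend_sum P m l' l'') (coend_rel P m l' l''))
        {C \<in> topspace (coend_sum P m l' l'') // coend_rel P m l' l''. coend_map P m l' l'' C \<in> U}"
      unfolding openin_quot eq by blast
  qed
  show "continuous_map (Hom P m (Ot P l' l'')) (coend_top P m l' l'')
      (\<lambda>\<psi>. coend_rel P m l' l'' `` {(l'', \<psi>, Idm P l'')})"
    unfolding continuous_map_def coend_top_def topspace_quot
  proof (intro conjI allI impI)
    show "(\<lambda>\<psi>. coend_rel P m l' l'' `` {(l'', \<psi>, Idm P l'')}) \<in> topspace (Hom P m (Ot P l' l'')) \<rightarrow>
        topspace (coend_sum P m l' l'') // coend_rel P m l' l''"
      by (auto intro: quotientI)
    fix V assume V: "openin (quot_top (coend_sum P m l' l'') (coend_rel P m l' l'')) V"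
    then have W: "openin (coend_sum P m l' l'') {x \<in> topspace (coend_sum P m l' l''). coend_rel P m l' l'' `` {x} \<in> V}"
      by (simp add: openin_quot)
    have eq: "{\<psi> \<in> topspace (Hom P m (Ot P l' l'')). (l'', \<psi>, Idm P l'') \<in>
          {x \<in> topspace (coend_sum P m l' l''). coend_rel P m l' l'' `` {x} \<in> V}}
        = {\<psi> \<in> topspace (Hom P m (Ot P l' l'')). coend_rel P m l' l'' `` {(l'', \<psi>, Idm P l'')} \<in> V}"
      by auto
    show "openin (Hom P m (Ot P l' l'')) {\<psi> \<in> topspace (Hom P m (Ot P l' l'')).
          coend_rel P m l' l'' `` {(l'', \<psi>, Idm P l'')} \<in> V}"
      using cont_inj W unfolding continuous_map_def eq[symmetric] by blast
  qed
  fix C assume "C \<in> topspace (coend_top P m l' l'')"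
  then obtain x where x: "x \<in> topspace (coend_sum P m l' l'')" and Cx: "C = coend_rel P m l' l'' `` {x}"
    and cm: "coend_map P m l' l'' C = F m l' l'' x"
    using cls unfolding coend_top_def topspace_quot by blast
  show "coend_rel P m l' l'' `` {(l'', coend_map P m l' l'' C, Idm P l'')} = C"
  proof -
    have e: "coend_rel P m l' l'' `` {(l'', F m l' l'' x, Idm P l'')} = coend_rel P m l' l'' `` {x}"
      using equiv_class_eq[OF equiv_R rel_back[OF x]] by simp
    show ?thesis by (simp only: Cx map_class[OF x] e)
  qed
next
  fix \<psi> assume h: "\<psi> \<in> topspace (Hom P m (Ot P l' l''))"
  then have "coend_map P m l' l'' (coend_rel P m l' l'' `` {(l'', \<psi>, Idm P l'')}) = F m l' l'' (l'', \<psi>, Idm P l'')"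
    by (intro map_class) simp
  also have "\<dots> = \<psi>" using h by simp
  finally show "coend_map P m l' l'' (coend_rel P m l' l'' `` {(l'', \<psi>, Idm P l'')}) = \<psi>" .
qed

end

theorem lemma3p2:
  fixes P :: "('o, 'm) smcat"
  assumes "reparam_cat P"
  shows
    "(\<forall>m l' l''. homeomorphic_map (coend_top P m l' l'') (Hom P m (Ot P l' l''))
                   (coend_map P m l' l'')) \<and>
     (\<forall>m l' l'' l \<psi> \<phi>. \<psi> \<in> topspace (Hom P m (Ot P l' l)) \<and> \<phi> \<in> topspace (Hom P l l'') \<longrightarrow>
        coend_map P m l' l'' (coend_class P m l' l'' (l, \<psi>, \<phi>))
          = Cmp P m (Ot P l' l) (Ot P l' l'') (Tm P l' l' l l'' (Idm P l') \<phi>) \<psi>) \<and>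
     (\<forall>m0 m l' l'' \<theta> C. \<theta> \<in> topspace (Hom P m0 m) \<and> C \<in> topspace (coend_top P m l' l'') \<longrightarrow>
        coend_map P m0 l' l'' (coend_act P l' l'' m0 m \<theta> C)
          = Cmp P m0 m (Ot P l' l'') (coend_map P m l' l'' C) \<theta>) \<and>
     (\<forall>m l' k' l'' \<alpha> C. \<alpha> \<in> topspace (Hom P l' k') \<and> C \<in> topspace (coend_top P m l' l'') \<longrightarrow>
        coend_map P m k' l'' (coend_mapL P m l'' l' k' \<alpha> C)
          = Cmp P m (Ot P l' l'') (Ot P k' l'') (Tm P l' k' l'' l'' \<alpha> (Idm P l''))
              (coend_map P m l' l'' C)) \<and>
     (\<forall>m l' l'' k'' \<beta> C. \<beta> \<in> topspace (Hom P l'' k'') \<and> C \<in> topspace (coend_top P m l' l'') \<longrightarrow>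
        coend_map P m l' k'' (coend_mapR P m l' l'' k'' \<beta> C)
          = Cmp P m (Ot P l' l'') (Ot P l' k'') (Tm P l' l' l'' k'' (Idm P l') \<beta>)
              (coend_map P m l' l'' C))"
proof -
  interpret rc P using assms unfolding reparam_cat_def by unfold_locales blast
  have top: "topspace (coend_top P m l' l'') = topspace (coend_sum P m l' l'') // coend_rel P m l' l''" for m l' l''
    by (simp add: coend_top_def)
  show ?thesis
  proof (intro conjI allI impI)
    show "homeomorphic_map (coend_top P m l' l'') (Hom P m (Ot P l' l'')) (coend_map P m l' l'')" for m l' l''
      by (rule homeo)
  next
    fix m l' l'' l \<psi> \<phi>
    assume "\<psi> \<in> topspace (Hom P m (Ot P l' l)) \<and> \<phi> \<in> topspace (Hom P l l'')"
    then show "coend_map P m l' l'' (coend_class P m l' l'' (l, \<psi>, \<phi>))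
          = Cmp P m (Ot P l' l) (Ot P l' l'') (Tm P l' l' l l'' (Idm P l') \<phi>) \<psi>"
      unfolding coend_class_def by (subst map_class) auto
  next
    fix m0 m l' l'' \<theta> C
    assume h: "\<theta> \<in> topspace (Hom P m0 m) \<and> C \<in> topspace (coend_top P m l' l'')"
    show "coend_map P m0 l' l'' (coend_act P l' l'' m0 m \<theta> C)
          = Cmp P m0 m (Ot P l' l'') (coend_map P m l' l'' C) \<theta>"
      unfolding coend_act_def
    proof (rule transport[where G = "\<lambda>z. Cmp P m0 m (Ot P l' l'') z \<theta>"])
      show "C \<in> topspace (coend_sum P m l' l'') // coend_rel P m l' l''" using h top by blast
      fix y assume "y \<in> topspace (coend_sum P m l' l'')"
      then show "(case y of (l, \<psi>, \<phi>) \<Rightarrow> (l, Cmp P m0 m (Ot P l' l) \<psi> \<theta>, \<phi>)) \<in> topspace (coend_sum P m0 l' l'') \<and>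
         F m0 l' l'' (case y of (l, \<psi>, \<phi>) \<Rightarrow> (l, Cmp P m0 m (Ot P l' l) \<psi> \<theta>, \<phi>)) =
         Cmp P m0 m (Ot P l' l'') (F m l' l'' y) \<theta>"
        using h by (cases y) (auto simp: cmp_assoc)
    qed
  next
    fix m l' k' l'' \<alpha> C
    assume h: "\<alpha> \<in> topspace (Hom P l' k') \<and> C \<in> topspace (coend_top P m l' l'')"
    show "coend_map P m k' l'' (coend_mapL P m l'' l' k' \<alpha> C)
          = Cmp P m (Ot P l' l'') (Ot P k' l'') (Tm P l' k' l'' l'' \<alpha> (Idm P l''))
              (coend_map P m l' l'' C)"
      unfolding coend_mapL_def
    proof (rule transport[where G = "\<lambda>z. Cmp P m (Ot P l' l'') (Ot P k' l'') (Tm P l' k' l'' l'' \<alpha> (Idm P l'')) z"])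
      show "C \<in> topspace (coend_sum P m l' l'') // coend_rel P m l' l''" using h top by blast
      fix y assume "y \<in> topspace (coend_sum P m l' l'')"
      then show "(case y of (l, \<psi>, \<phi>) \<Rightarrow> (l, Cmp P m (Ot P l' l) (Ot P k' l) (Tm P l' k' l l \<alpha> (Idm P l)) \<psi>, \<phi>))
            \<in> topspace (coend_sum P m k' l'') \<and>
         F m k' l'' (case y of (l, \<psi>, \<phi>) \<Rightarrow> (l, Cmp P m (Ot P l' l) (Ot P k' l) (Tm P l' k' l l \<alpha> (Idm P l)) \<psi>, \<phi>)) =
         Cmp P m (Ot P l' l'') (Ot P k' l'') (Tm P l' k' l'' l'' \<alpha> (Idm P l'')) (F m l' l'' y)"
        using h by (cases y) (auto simp: cmp_assoc tm_cmp)
    qed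
  next
    fix m l' l'' k'' \<beta> C
    assume h: "\<beta> \<in> topspace (Hom P l'' k'') \<and> C \<in> topspace (coend_top P m l' l'')"
    show "coend_map P m l' k'' (coend_mapR P m l' l'' k'' \<beta> C)
          = Cmp P m (Ot P l' l'') (Ot P l' k'') (Tm P l' l' l'' k'' (Idm P l') \<beta>)
              (coend_map P m l' l'' C)"
      unfolding coend_mapR_def
    proof (rule transport[where G = "\<lambda>z. Cmp P m (Ot P l' l'') (Ot P l' k'') (Tm P l' l' l'' k'' (Idm P l') \<beta>) z"])
      show "C \<in> topspace (coend_sum P m l' l'') // coend_rel P m l' l''" using h top by blast
      fix y assume "y \<in> topspace (coend_sum P m l' l'')"
      then show "(case y of (l, \<psi>, \<phi>) \<Rightarrow> (l, \<psi>, Cmp P l l'' k'' \<beta> \<phi>)) \<in> topspace (coend_sum P m l' k'') \<and>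
         F m l' k'' (case y of (l, \<psi>, \<phi>) \<Rightarrow> (l, \<psi>, Cmp P l l'' k'' \<beta> \<phi>)) =
         Cmp P m (Ot P l' l'') (Ot P l' k'') (Tm P l' l' l'' k'' (Idm P l') \<beta>) (F m l' l'' y)"
        using h by (cases y) (auto simp: cmp_assoc tm_cmp)
    qed
  qed
qed

end
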